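(* Let $\varphi(x_1,\dots,x_n)=\bigwedge_{i=1}^m \mathit{cl}_i$ be a 3-CNF formula (each clause has exactly three distinct literals). Let $\mathcal{A}_\varphi$ be the one-player (all places owned by player 1) weighted recursive game graph with modules $A_0$, one module $A_y$ for each literal $y\in\{x_1,\neg x_1,\dots,x_n,\neg x_n\}$, and one module $A_{\mathit{cl}_i}$ per clause, each with a single entry and a single exit, defined as follows: $A_0$ (the initial module) invokes, in an infinite loop, boxes calling $A_{\mathit{cl}_1},A_{\mathit{cl}_2},\dots,A_{\mathit{cl}_m}$ in sequence, all transitions of weight $0$; in $A_{\mathit{cl}_i}$, for each literal $y$ of $\mathit{cl}_i$ there is a weight-$0$ transition from the entry to a box invoking $A_y$ and a weight-$0$ transition from that box's return to the exit; in $A_y$, the entry has exactly two outgoing transitions: a "false" transition directly to the exit with weight $-1$, and a "true" transition of weight $-1$ to a box invoking $A_{\neg y}$ (with $\neg\neg x=x$), whose return leads to the exit with weight $+2$. Then player 1 has a modular winning strategy in $\mathcal{A}_\varphi$ for the objective $\mathrm{LimInfAvg}\geq 0$ if and only if $\varphi$ is satisfiable.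
   Context: A weighted recursive game graph consists of modules, each with nodes, entry and exit nodes, boxes each invoking some module, and weighted transitions among nodes, calls (box, entry of invoked module) and returns (box, exit of invoked module); plays evolve over configurations consisting of a call stack of boxes and a current node, a call pushing the box and entering the invoked module, reaching an exit popping the box and continuing from the corresponding return. A modular strategy for player 1 assigns to each module a local strategy whose choice depends only on the sequence of nodes visited in the current invocation of that module (not on the calling context). A strategy is winning for $\mathrm{LimInfAvg}\geq 0$ if every consistent play $\pi$ has $\liminf_m w(\pi[1,m])/m\geq 0$, where $w$ is the sum of transition weights. *)

theory Defs
  imports Complex_Main "HOL-Library.Extended_Real"
begin

text \<open>Positions inside a module: nodes, calls (box, entry of invoked module)
  and returns (box, exit of invoked module).\<close>
datatype ('v, 'b) pos = Nd 'v | Cl 'b 'v | Rt 'b 'v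

record ('m, 'v, 'b) rgg =
  mods     :: "'m set"
  init     :: 'm
  start    :: 'v
  nodes    :: "'m \<Rightarrow> 'v set"
  entries  :: "'m \<Rightarrow> 'v set"
  exits    :: "'m \<Rightarrow> 'v set"
  boxes    :: "'m \<Rightarrow> 'b set"
  invokes  :: "'m \<Rightarrow> 'b \<Rightarrow> 'm"
  trans    :: "'m \<Rightarrow> (('v, 'b) pos \<times> int \<times> ('v, 'b) pos) set"
  own1     :: "'m \<Rightarrow> ('v, 'b) pos set"

text \<open>A configuration is the call stack, each frame recording the module being
  executed and the (reversed, most recent first) sequence of positions visited
  in that invocation; the head of the top frame is the current position.
  Projecting away the histories gives the usual (stack of boxes, current node).\<close>
type_synonym ('m, 'v, 'b) config = "('m \<times> ('v, 'b) pos list) list"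

inductive step :: "('m, 'v, 'b, 'z) rgg_scheme \<Rightarrow> ('m, 'v, 'b) config \<Rightarrow> int
                    \<Rightarrow> ('m, 'v, 'b) config \<Rightarrow> bool" for G where
  internal: "(p, w, q) \<in> trans G m \<Longrightarrow>
     step G ((m, p # h) # st) w ((m, q # p # h) # st)"
| call: "b \<in> boxes G m \<Longrightarrow> e \<in> entries G (invokes G m b) \<Longrightarrow>
     step G ((m, Cl b e # h) # st) 0
            ((invokes G m b, [Nd e]) # (m, Cl b e # h) # st)"
| return: "m' = invokes G m b \<Longrightarrow> x \<in> exits G m' \<Longrightarrow>
     step G ((m', Nd x # h') # (m, Cl b e # h) # st) 0
            ((m, Rt b x # Cl b e # h) # st)"

definition init_config :: "('m, 'v, 'b, 'z) rgg_scheme \<Rightarrow> ('m, 'v, 'b) config" where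
  "init_config G = [(init G, [Nd (start G)])]"

text \<open>A modular strategy of player 1: for each module a local strategy mapping the
  sequence of positions visited in the current invocation (most recent first)
  to a transition of that module.\<close>
type_synonym ('m, 'v, 'b) mstrategy =
  "'m \<Rightarrow> ('v, 'b) pos list \<Rightarrow> (('v, 'b) pos \<times> int \<times> ('v, 'b) pos)"

definition legal_strategy :: "('m, 'v, 'b, 'z) rgg_scheme \<Rightarrow> ('m, 'v, 'b) mstrategy \<Rightarrow> bool" where
  "legal_strategy G \<sigma> \<longleftrightarrow>
     (\<forall>m p h. p \<in> own1 G m \<and> (\<exists>t\<in>trans G m. fst t = p) \<longrightarrow>
        \<sigma> m (p # h) \<in> trans G m \<and> fst (\<sigma> m (p # h)) = p)"

definition consistent_play :: "('m, 'v, 'b, 'z) rgg_scheme \<Rightarrow> ('m, 'v, 'b) mstrategy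
     \<Rightarrow> (nat \<Rightarrow> ('m, 'v, 'b) config) \<Rightarrow> (nat \<Rightarrow> int) \<Rightarrow> bool" where
  "consistent_play G \<sigma> c w \<longleftrightarrow>
     c 0 = init_config G \<and>
     (\<forall>i. step G (c i) (w i) (c (Suc i))) \<and>
     (\<forall>i m p h st. c i = (m, p # h) # st \<and> p \<in> own1 G m \<and> (\<exists>t\<in>trans G m. fst t = p) \<longrightarrow>
        (\<exists>q. \<sigma> m (p # h) = (p, w i, q) \<and> c (Suc i) = (m, q # p # h) # st))"

definition liminf_avg_nonneg :: "(nat \<Rightarrow> int) \<Rightarrow> bool" where
  "liminf_avg_nonneg w \<longleftrightarrow>
     Liminf sequentially (\<lambda>k. ereal (real_of_int (\<Sum>i<k. w i) / real k)) \<ge> 0"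

definition modular_winning :: "('m, 'v, 'b, 'z) rgg_scheme \<Rightarrow> ('m, 'v, 'b) mstrategy \<Rightarrow> bool" where
  "modular_winning G \<sigma> \<longleftrightarrow> legal_strategy G \<sigma> \<and>
     (\<forall>c w. consistent_play G \<sigma> c w \<longrightarrow> liminf_avg_nonneg w)"

definition has_modular_winning :: "('m, 'v, 'b, 'z) rgg_scheme \<Rightarrow> bool" where
  "has_modular_winning G \<longleftrightarrow> (\<exists>\<sigma>. modular_winning G \<sigma>)"

text \<open>Literal \<open>(k, True)\<close> is \<open>x\<^sub>k\<close>, \<open>(k, False)\<close> is \<open>\<not>x\<^sub>k\<close>; a clause is a list of literals,
  a formula a list of clauses.\<close>
type_synonym lit = "nat \<times> bool"

definition neg_lit :: "lit \<Rightarrow> lit" where "neg_lit l = (fst l, \<not> snd l)"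

definition lit_val :: "(nat \<Rightarrow> bool) \<Rightarrow> lit \<Rightarrow> bool" where
  "lit_val a l \<longleftrightarrow> a (fst l) = snd l"

definition satisfiable :: "lit list list \<Rightarrow> bool" where
  "satisfiable cls \<longleftrightarrow> (\<exists>a. \<forall>c\<in>set cls. \<exists>l\<in>set c. lit_val a l)"

definition is_3cnf :: "nat \<Rightarrow> lit list list \<Rightarrow> bool" where
  "is_3cnf n cls \<longleftrightarrow> (\<forall>c\<in>set cls. length c = 3 \<and> distinct c \<and> (\<forall>l\<in>set c. fst l \<in> {1..n}))"

datatype modname = M0 | MLit lit | MCl nat
datatype vtx = En | Ex

definition phi_game :: "nat \<Rightarrow> lit list list \<Rightarrow> (modname, vtx, nat) rgg" where
  "phi_game n cls = \<lparr>
     mods = {M0} \<union> MLit ` ({1..n} \<times> UNIV) \<union> MCl ` {..<length cls},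
     init = M0,
     start = En,
     nodes = (\<lambda>_. {En, Ex}),
     entries = (\<lambda>_. {En}),
     exits = (\<lambda>_. {Ex}),
     boxes = (\<lambda>m. case m of M0 \<Rightarrow> {..<length cls} | MCl i \<Rightarrow> {..<3} | MLit y \<Rightarrow> {0}),
     invokes = (\<lambda>m b. case m of M0 \<Rightarrow> MCl b
                               | MCl i \<Rightarrow> MLit (cls ! i ! b)
                               | MLit y \<Rightarrow> MLit (neg_lit y)),
     trans = (\<lambda>m. case m of
         M0 \<Rightarrow> (if cls = [] then {} else
                 {(Nd En, 0, Cl 0 En)} \<union>
                 {(Rt i Ex, 0, Cl (Suc i mod length cls) En) | i. i < length cls})
       | MCl i \<Rightarrow> {(Nd En, 0, Cl j En) | j. j < 3} \<union> {(Rt j Ex, 0, Nd Ex) | j. j < 3}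
       | MLit y \<Rightarrow> {(Nd En, -1, Nd Ex), (Nd En, -1, Cl 0 En), (Rt 0 Ex, 2, Nd Ex)}),
     own1 = (\<lambda>_. UNIV) \<rparr>"

end

theory Submission
  imports Defs
begin

lemma liminf_lb:
  fixes w :: "nat \<Rightarrow> int" and C :: real
  assumes "\<And>k. real_of_int (\<Sum>i<k. w i) \<ge> - C"
  shows "liminf_avg_nonneg w"
proof -
  have lim: "(\<lambda>k. ereal (- C / real k)) \<longlonglongrightarrow> ereal 0"
    by (intro tendsto_ereal lim_const_over_n)
  have "Liminf sequentially (\<lambda>k. ereal (- C / real k)) = ereal 0"
    by (rule lim_imp_Liminf[OF _ lim]) simp
  moreover have "Liminf sequentially (\<lambda>k. ereal (- C / real k))
      \<le> Liminf sequentially (\<lambda>k. ereal (real_of_int (\<Sum>i<k. w i) / real k))"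
  proof (rule Liminf_mono)
    show "\<forall>\<^sub>F k in sequentially. ereal (- C / real k) \<le> ereal (real_of_int (\<Sum>i<k. w i) / real k)"
      unfolding eventually_sequentially
    proof (intro exI[of _ 1] allI impI)
      fix k :: nat assume "1 \<le> k"
      then have "real k > 0" by simp
      then show "ereal (- C / real k) \<le> ereal (real_of_int (\<Sum>i<k. w i) / real k)"
        using assms[of k] divide_right_mono[of "- C" "real_of_int (\<Sum>i<k. w i)" "real k"] by simp
    qed
  qed
  ultimately show ?thesis unfolding liminf_avg_nonneg_def by (simp add: zero_ereal_def)
qed

lemma not_liminf:
  fixes w :: "nat \<Rightarrow> int" and d :: real
  assumes "d > 0" and "\<And>N. \<exists>k\<ge>N. real_of_int (\<Sum>i<k. w i) / real k \<le> - d"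
  shows "\<not> liminf_avg_nonneg w"
proof
  assume "liminf_avg_nonneg w"
  then have "\<forall>y<0. eventually (\<lambda>k. y < ereal (real_of_int (\<Sum>i<k. w i) / real k)) sequentially"
    unfolding liminf_avg_nonneg_def le_Liminf_iff by blast
  then have "eventually (\<lambda>k. ereal (- d) < ereal (real_of_int (\<Sum>i<k. w i) / real k)) sequentially"
  proof -
    have "ereal (- d) < 0" using assms(1) by simp
    with \<open>\<forall>y<0. _\<close> show ?thesis by blast
  qed
  then obtain N where "\<And>k. k \<ge> N \<Longrightarrow> - d < real_of_int (\<Sum>i<k. w i) / real k"
    unfolding eventually_sequentially by auto
  with assms(2)[of N] show False by force
qed


fun hastr :: "lit list list \<Rightarrow> modname \<Rightarrow> (vtx, nat) pos \<Rightarrow> bool" where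
  "hastr cls M0 p = (cls \<noteq> [] \<and> (p = Nd En \<or> (\<exists>i<length cls. p = Rt i Ex)))"
| "hastr cls (MCl i) p = (p = Nd En \<or> (\<exists>j<3. p = Rt j Ex))"
| "hastr cls (MLit y) p = (p = Nd En \<or> p = Rt 0 Ex)"

fun invk :: "lit list list \<Rightarrow> modname \<Rightarrow> nat \<Rightarrow> modname" where
  "invk cls M0 b = MCl b"
| "invk cls (MCl i) b = MLit (cls ! i ! b)"
| "invk cls (MLit y) b = MLit (neg_lit y)"

fun bx :: "lit list list \<Rightarrow> modname \<Rightarrow> nat set" where
  "bx cls M0 = {..<length cls}"
| "bx cls (MCl i) = {..<3}"
| "bx cls (MLit y) = {0}"

lemma G_invokes[simp]: "invokes (phi_game n cls) = invk cls"
  by (auto simp: phi_game_def fun_eq_iff split: modname.split)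
lemma G_boxes[simp]: "boxes (phi_game n cls) = bx cls"
  by (auto simp: phi_game_def fun_eq_iff split: modname.split)
lemma G_entries[simp]: "entries (phi_game n cls) = (\<lambda>_. {En})"
  by (simp add: phi_game_def)
lemma G_exits[simp]: "exits (phi_game n cls) = (\<lambda>_. {Ex})"
  by (simp add: phi_game_def)
lemma G_own1[simp]: "own1 (phi_game n cls) = (\<lambda>_. UNIV)"
  by (simp add: phi_game_def)
lemma G_init[simp]: "init_config (phi_game n cls) = [(M0, [Nd En])]"
  by (simp add: phi_game_def init_config_def)

lemma G_trans_M0: "trans (phi_game n cls) M0 = (if cls = [] then {} else
                 {(Nd En, 0, Cl 0 En)} \<union>
                 {(Rt i Ex, 0, Cl (Suc i mod length cls) En) | i. i < length cls})"
  by (simp add: phi_game_def)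
lemma G_trans_MCl: "trans (phi_game n cls) (MCl i) = {(Nd En, 0, Cl j En) | j. j < 3} \<union> {(Rt j Ex, 0, Nd Ex) | j. j < 3}"
  by (simp add: phi_game_def)
lemma G_trans_MLit: "trans (phi_game n cls) (MLit y) = {(Nd En, -1, Nd Ex), (Nd En, -1, Cl 0 En), (Rt 0 Ex, 2, Nd Ex)}"
  by (simp add: phi_game_def)
lemmas G_trans = G_trans_M0 G_trans_MCl G_trans_MLit

lemma hastr_iff: "(\<exists>t\<in>trans (phi_game n cls) m. fst t = p) \<longleftrightarrow> hastr cls m p"
proof (cases m)
  case M0 then show ?thesis by (auto simp: G_trans)
next
  case (MLit y) then show ?thesis by (auto simp: G_trans)
next
  case (MCl i)
  have "(Nd En, 0, Cl 0 En) \<in> trans (phi_game n cls) m" "\<And>j. j < 3 \<Longrightarrow> (Rt j Ex, 0, Nd Ex) \<in> trans (phi_game n cls) m"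
    using MCl by (auto simp: G_trans)
  then show ?thesis using MCl by (simp add: G_trans) force
qed

lemma hastr_Cl[simp]: "\<not> hastr cls m (Cl b e)"
  by (cases m) auto

lemma legalD:
  assumes "legal_strategy (phi_game n cls) \<sigma>" "hastr cls m p"
  shows "\<sigma> m (p # h) \<in> trans (phi_game n cls) m \<and> fst (\<sigma> m (p # h)) = p"
  using assms(1) hastr_iff[of n cls m p] assms(2) unfolding legal_strategy_def by auto

definition okp :: "lit list list \<Rightarrow> modname \<Rightarrow> (vtx, nat) pos \<Rightarrow> bool" where
  "okp cls m p \<longleftrightarrow> hastr cls m p \<or> (\<exists>b\<in>bx cls m. p = Cl b En) \<or> (p = Nd Ex \<and> m \<noteq> M0)"

fun wfs :: "lit list list \<Rightarrow> modname \<Rightarrow> (modname, vtx, nat) config \<Rightarrow> bool" where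
  "wfs cls m [] = (m = M0)"
| "wfs cls m ((m', h') # st) = (m \<noteq> M0 \<and> (\<exists>b h0. h' = Cl b En # h0 \<and> b \<in> bx cls m' \<and> invk cls m' b = m) \<and> wfs cls m' st)"

fun wfc :: "lit list list \<Rightarrow> (modname, vtx, nat) config \<Rightarrow> bool" where
  "wfc cls ((m, p # h) # st) = (okp cls m p \<and> wfs cls m st)"
| "wfc cls _ = False"

fun nxt_nt :: "lit list list \<Rightarrow> modname \<Rightarrow> (vtx, nat) pos \<Rightarrow> (vtx, nat) pos list
   \<Rightarrow> (modname, vtx, nat) config \<Rightarrow> int \<times> (modname, vtx, nat) config" where
  "nxt_nt cls m (Cl b e) h st = (0, (invk cls m b, [Nd e]) # (m, Cl b e # h) # st)"
| "nxt_nt cls m (Nd x) h ((m0, Cl b e # h0) # st') = (0, (m0, Rt b x # Cl b e # h0) # st')"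
| "nxt_nt cls m p h st = (0, [])"

fun nxt :: "lit list list \<Rightarrow> (modname, vtx, nat) mstrategy \<Rightarrow> (modname, vtx, nat) config
   \<Rightarrow> int \<times> (modname, vtx, nat) config" where
  "nxt cls \<sigma> ((m, p # h) # st) = (if hastr cls m p
     then (fst (snd (\<sigma> m (p # h))), (m, snd (snd (\<sigma> m (p # h))) # p # h) # st)
     else nxt_nt cls m p h st)"
| "nxt cls \<sigma> _ = (0, [])"

lemma target_ok: "(p, w, q) \<in> trans (phi_game n cls) m \<Longrightarrow> okp cls m q"
  by (cases m) (auto simp: G_trans okp_def split: if_splits)

lemma nxt_step:
  assumes legal: "legal_strategy (phi_game n cls) \<sigma>" and wf: "wfc cls c"
  shows "step (phi_game n cls) c (fst (nxt cls \<sigma> c)) (snd (nxt cls \<sigma> c)) \<and> wfc cls (snd (nxt cls \<sigma> c))"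
proof -
  obtain m p h st where c: "c = (m, p # h) # st"
    using wf by (cases "(cls, c)" rule: wfc.cases) auto
  have ok: "okp cls m p" and ws: "wfs cls m st" using wf c by auto
  show ?thesis
  proof (cases "hastr cls m p")
    case True
    obtain p' w q where s: "\<sigma> m (p # h) = (p', w, q)" by (cases "\<sigma> m (p # h)") auto
    with legalD[OF legal True, of h] have p': "p' = p" and tr: "(p, w, q) \<in> trans (phi_game n cls) m" by auto
    have "nxt cls \<sigma> c = (w, (m, q # p # h) # st)" using c True s p' by simp
    then show ?thesis using step.internal[OF tr, of h st] target_ok[OF tr] ws c by simp
  next
    case False
    then consider b where "b \<in> bx cls m" "p = Cl b En" | "p = Nd Ex" "m \<noteq> M0"
      using ok unfolding okp_def by blast
    then show ?thesis
    proof cases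
      case 1
      have "nxt cls \<sigma> c = (0, (invk cls m b, [Nd En]) # c)" using c 1 by simp
      moreover have "step (phi_game n cls) c 0 ((invokes (phi_game n cls) m b, [Nd En]) # c)"
        unfolding c 1 by (rule step.call) (use 1 in auto)
      moreover have "okp cls (invk cls m b) (Nd En)"
        by (cases m) (auto simp: okp_def)
      moreover have "invk cls m b \<noteq> M0" by (cases m) auto
      ultimately show ?thesis using 1 c ws by auto
    next
      case 2
      then obtain m' b h0 st' where st: "st = (m', Cl b En # h0) # st'" and b: "b \<in> bx cls m'"
        and inv: "invk cls m' b = m" and ws': "wfs cls m' st'"
        using ws by (cases st) auto
      have "nxt cls \<sigma> c = (0, (m', Rt b Ex # Cl b En # h0) # st')" using c 2 st False by simp
      moreover have "step (phi_game n cls) c 0 ((m', Rt b Ex # Cl b En # h0) # st')"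
        unfolding c st 2 by (rule step.return) (use inv in auto)
      moreover have "okp cls m' (Rt b Ex)" using b by (cases m') (auto simp: okp_def)
      ultimately show ?thesis using ws' by simp
    qed
  qed
qed

definition pc :: "lit list list \<Rightarrow> (modname, vtx, nat) mstrategy \<Rightarrow> nat \<Rightarrow> (modname, vtx, nat) config" where
  "pc cls \<sigma> k = ((snd \<circ> nxt cls \<sigma>) ^^ k) [(M0, [Nd En])]"
definition pw :: "lit list list \<Rightarrow> (modname, vtx, nat) mstrategy \<Rightarrow> nat \<Rightarrow> int" where
  "pw cls \<sigma> k = fst (nxt cls \<sigma> (pc cls \<sigma> k))"

lemma pc_Suc: "pc cls \<sigma> (Suc k) = snd (nxt cls \<sigma> (pc cls \<sigma> k))"
  by (simp add: pc_def)

lemma pc_wf: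
  assumes "legal_strategy (phi_game n cls) \<sigma>" "cls \<noteq> []"
  shows "wfc cls (pc cls \<sigma> k)"
proof (induction k)
  case 0 then show ?case using assms by (simp add: pc_def okp_def)
next
  case (Suc k) then show ?case using nxt_step[OF assms(1)] by (simp add: pc_Suc)
qed

lemma pc_consistent:
  assumes "legal_strategy (phi_game n cls) \<sigma>" "cls \<noteq> []"
  shows "consistent_play (phi_game n cls) \<sigma> (pc cls \<sigma>) (pw cls \<sigma>)"
  unfolding consistent_play_def
proof (intro conjI allI impI)
  show "pc cls \<sigma> 0 = init_config (phi_game n cls)" by (simp add: pc_def)
next
  fix i show "step (phi_game n cls) (pc cls \<sigma> i) (pw cls \<sigma> i) (pc cls \<sigma> (Suc i))"
    using nxt_step[OF assms(1) pc_wf[OF assms]] by (simp add: pw_def pc_Suc)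
next
  fix i m p h st
  assume a: "pc cls \<sigma> i = (m, p # h) # st \<and> p \<in> own1 (phi_game n cls) m \<and>
       (\<exists>t\<in>trans (phi_game n cls) m. fst t = p)"
  then have ht: "hastr cls m p" using hastr_iff by blast
  obtain p' w q where s: "\<sigma> m (p # h) = (p', w, q)" by (cases "\<sigma> m (p # h)") auto
  with legalD[OF assms(1) ht, of h] have "p' = p" by auto
  then show "\<exists>q. \<sigma> m (p # h) = (p, pw cls \<sigma> i, q) \<and> pc cls \<sigma> (Suc i) = (m, q # p # h) # st"
    using a ht s by (simp add: pw_def pc_Suc)
qed

lemma step_det:
  assumes st: "step (phi_game n cls) x w y"
    and loc: "\<forall>m p h st. x = (m, p # h) # st \<and> hastr cls m p \<longrightarrow>
        (\<exists>q. \<sigma> m (p # h) = (p, w, q) \<and> y = (m, q # p # h) # st)"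
  shows "w = fst (nxt cls \<sigma> x) \<and> y = snd (nxt cls \<sigma> x)"
  using st
proof (rule step.cases)
  fix p w' q m h st'
  assume a: "x = (m, p # h) # st'" "w = w'" "y = (m, q # p # h) # st'"
     "(p, w', q) \<in> trans (phi_game n cls) m"
  then have "hastr cls m p" using hastr_iff[of n cls m p] by force
  then show ?thesis using loc a by auto
next
  fix b m e h st'
  assume "x = (m, Cl b e # h) # st'" "w = 0"
     "y = (invokes (phi_game n cls) m b, [Nd e]) # (m, Cl b e # h) # st'"
  then show ?thesis by simp
next
  fix m' m b x' h' e h st'
  assume a: "x = (m', Nd x' # h') # (m, Cl b e # h) # st'" "w = 0"
     "y = (m, Rt b x' # Cl b e # h) # st'"
  show ?thesis
  proof (cases "hastr cls m' (Nd x')")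
    case True
    then obtain q where "y = (m', q # Nd x' # h') # (m, Cl b e # h) # st'" using loc a by blast
    then have "length y = length st' + 2" by simp
    moreover have "length y = length st' + 1" using a by simp
    ultimately show ?thesis by simp
  qed (use a in simp)
qed

lemma consistent_unique:
  assumes "consistent_play (phi_game n cls) \<sigma> c w"
  shows "c i = pc cls \<sigma> i \<and> w i = pw cls \<sigma> i"
proof -
  have c0: "c 0 = [(M0, [Nd En])]" and st: "\<And>i. step (phi_game n cls) (c i) (w i) (c (Suc i))"
    and loc: "\<And>i. \<forall>m p h st. c i = (m, p # h) # st \<and> hastr cls m p \<longrightarrow>
        (\<exists>q. \<sigma> m (p # h) = (p, w i, q) \<and> c (Suc i) = (m, q # p # h) # st)"
    using assms unfolding consistent_play_def by (auto simp: hastr_iff)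
  have det: "\<And>i. w i = fst (nxt cls \<sigma> (c i)) \<and> c (Suc i) = snd (nxt cls \<sigma> (c i))"
    using step_det[OF st loc] by blast
  have ci: "c i = pc cls \<sigma> i" for i
    by (induction i) (auto simp: c0 pc_def det)
  show ?thesis using det ci by (simp add: pw_def)
qed

fun run :: "lit list list \<Rightarrow> (modname, vtx, nat) mstrategy \<Rightarrow> nat \<Rightarrow> (modname, vtx, nat) config
   \<Rightarrow> int \<times> (modname, vtx, nat) config" where
  "run cls \<sigma> 0 c = (0, c)"
| "run cls \<sigma> (Suc k) c = (case nxt cls \<sigma> c of (w, c') \<Rightarrow> (case run cls \<sigma> k c' of (s, c'') \<Rightarrow> (w + s, c'')))"

lemma run_play: "run cls \<sigma> k c = ((\<Sum>i<k. fst (nxt cls \<sigma> (((snd \<circ> nxt cls \<sigma>) ^^ i) c))), ((snd \<circ> nxt cls \<sigma>) ^^ k) c)"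
proof (induction k arbitrary: c)
  case 0 then show ?case by simp
next
  case (Suc k)
  show ?case
    by (simp add: Suc split_def sum.lessThan_Suc_shift funpow_Suc_right del: funpow.simps sum.lessThan_Suc)
qed

lemma run_pw: "(\<Sum>i<k. pw cls \<sigma> i) = fst (run cls \<sigma> k [(M0, [Nd En])])"
  by (simp add: run_play pw_def pc_def)

lemma run_add: "run cls \<sigma> (a + b) c = (case run cls \<sigma> a c of (s, c') \<Rightarrow> (case run cls \<sigma> b c' of (s2, c'') \<Rightarrow> (s + s2, c'')))"
  by (induction a arbitrary: c) (auto simp: split_def)

lemma neg_neg[simp]: "neg_lit (neg_lit y) = y"
  by (simp add: neg_lit_def)

definition tt :: "(modname, vtx, nat) mstrategy \<Rightarrow> lit \<Rightarrow> bool" where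
  "tt \<sigma> y \<longleftrightarrow> \<sigma> (MLit y) [Nd En] = (Nd En, -1, Cl 0 En)"
definition chh :: "(modname, vtx, nat) mstrategy \<Rightarrow> nat \<Rightarrow> nat" where
  "chh \<sigma> i = (case snd (snd (\<sigma> (MCl i) [Nd En])) of Cl j _ \<Rightarrow> j | _ \<Rightarrow> 0)"
definition yy :: "lit list list \<Rightarrow> (modname, vtx, nat) mstrategy \<Rightarrow> nat \<Rightarrow> lit" where
  "yy cls \<sigma> i = cls ! i ! chh \<sigma> i"

locale gm =
  fixes n :: nat and cls :: "lit list list" and \<sigma> :: "(modname, vtx, nat) mstrategy"
  assumes legal: "legal_strategy (phi_game n cls) \<sigma>" and ne: "cls \<noteq> []"
begin

lemma s_M0_En: "\<sigma> M0 (Nd En # h) = (Nd En, 0, Cl 0 En)"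
  using legalD[OF legal, of M0 "Nd En" h] ne by (auto simp: G_trans)

lemma s_M0_Rt: "i < length cls \<Longrightarrow> \<sigma> M0 (Rt i Ex # h) = (Rt i Ex, 0, Cl (Suc i mod length cls) En)"
  using legalD[OF legal, of M0 "Rt i Ex" h] ne by (auto simp: G_trans)

lemma s_Cl_En: "\<sigma> (MCl i) [Nd En] = (Nd En, 0, Cl (chh \<sigma> i) En) \<and> chh \<sigma> i < 3"
  using legalD[OF legal, of "MCl i" "Nd En" "[]"] by (auto simp: G_trans chh_def)

lemma s_Cl_Rt: "j < 3 \<Longrightarrow> \<sigma> (MCl i) (Rt j Ex # h) = (Rt j Ex, 0, Nd Ex)"
  using legalD[OF legal, of "MCl i" "Rt j Ex" h] by (auto simp: G_trans)

lemma s_Lit_f: "\<not> tt \<sigma> y \<Longrightarrow> \<sigma> (MLit y) [Nd En] = (Nd En, -1, Nd Ex)"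
  using legalD[OF legal, of "MLit y" "Nd En" "[]"] by (auto simp: G_trans tt_def)

lemma s_Lit_Rt: "\<sigma> (MLit y) (Rt 0 Ex # h) = (Rt 0 Ex, 2, Nd Ex)"
  using legalD[OF legal, of "MLit y" "Rt 0 Ex" h] by (auto simp: G_trans)

lemma enter3: "run cls \<sigma> 3 [(M0, Cl i En # H)] =
   (0, (MLit (yy cls \<sigma> i), [Nd En]) # (MCl i, [Cl (chh \<sigma> i) En, Nd En]) # [(M0, Cl i En # H)])"
  using s_Cl_En[of i] by (simp add: numeral_eq_Suc yy_def)

lemma good12:
  assumes i: "i < length cls" and t1: "tt \<sigma> (yy cls \<sigma> i)" and t2: "\<not> tt \<sigma> (neg_lit (yy cls \<sigma> i))"
  shows "run cls \<sigma> 12 [(M0, Cl i En # H)] = (0, [(M0, Cl (Suc i mod length cls) En # Rt i Ex # Cl i En # H)])"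
  using s_Cl_En[of i] t1[unfolded tt_def] s_Lit_f[OF t2] i
  by (simp add: numeral_eq_Suc yy_def s_Lit_Rt s_Cl_Rt s_M0_Rt ne)

lemma false8:
  assumes i: "i < length cls" and t1: "\<not> tt \<sigma> (yy cls \<sigma> i)"
  shows "run cls \<sigma> 8 [(M0, Cl i En # H)] = (-1, [(M0, Cl (Suc i mod length cls) En # Rt i Ex # Cl i En # H)])"
  using s_Cl_En[of i] s_Lit_f[OF t1] i
  by (simp add: numeral_eq_Suc yy_def s_Lit_Rt s_Cl_Rt s_M0_Rt ne)

lemma good_partial:
  assumes i: "i < length cls" and t1: "tt \<sigma> (yy cls \<sigma> i)" and t2: "\<not> tt \<sigma> (neg_lit (yy cls \<sigma> i))"
    and r: "r \<le> 12"
  shows "fst (run cls \<sigma> r [(M0, Cl i En # H)]) \<ge> -2"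
proof -
  note f = s_Cl_En[of i] t1[unfolded tt_def yy_def] s_Lit_f[OF t2[unfolded yy_def]] i
  define P where "P k \<longleftrightarrow> fst (run cls \<sigma> k [(M0, Cl i En # H)]) \<ge> -2" for k
  have "r = 0 \<or> r = 1 \<or> r = 2 \<or> r = 3 \<or> r = 4 \<or> r = 5 \<or> r = 6 \<or> r = 7 \<or> r = 8 \<or> r = 9 \<or> r = 10 \<or> r = 11 \<or> r = 12"
    using r by arith
  moreover
  have "P 0" using f by (simp add: P_def numeral_eq_Suc s_Lit_Rt s_Cl_Rt s_M0_Rt ne)
  moreover have "P 1" using f by (simp add: P_def numeral_eq_Suc s_Lit_Rt s_Cl_Rt s_M0_Rt ne)
  moreover have "P 2" using f by (simp add: P_def numeral_eq_Suc s_Lit_Rt s_Cl_Rt s_M0_Rt ne)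
  moreover have "P 3" using f by (simp add: P_def numeral_eq_Suc s_Lit_Rt s_Cl_Rt s_M0_Rt ne)
  moreover have "P 4" using f by (simp add: P_def numeral_eq_Suc s_Lit_Rt s_Cl_Rt s_M0_Rt ne)
  moreover have "P 5" using f by (simp add: P_def numeral_eq_Suc s_Lit_Rt s_Cl_Rt s_M0_Rt ne)
  moreover have "P 6" using f by (simp add: P_def numeral_eq_Suc s_Lit_Rt s_Cl_Rt s_M0_Rt ne)
  moreover have "P 7" using f by (simp add: P_def numeral_eq_Suc s_Lit_Rt s_Cl_Rt s_M0_Rt ne)
  moreover have "P 8" using f by (simp add: P_def numeral_eq_Suc s_Lit_Rt s_Cl_Rt s_M0_Rt ne)
  moreover have "P 9" using f by (simp add: P_def numeral_eq_Suc s_Lit_Rt s_Cl_Rt s_M0_Rt ne)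
  moreover have "P 10" using f by (simp add: P_def numeral_eq_Suc s_Lit_Rt s_Cl_Rt s_M0_Rt ne)
  moreover have "P 11" using f by (simp add: P_def numeral_eq_Suc s_Lit_Rt s_Cl_Rt s_M0_Rt ne)
  moreover have "P 12" using f by (simp add: P_def numeral_eq_Suc s_Lit_Rt s_Cl_Rt s_M0_Rt ne)
  ultimately have "P r" by (elim disjE) simp_all
  then show ?thesis by (simp add: P_def)
qed

lemma div2:
  assumes "tt \<sigma> z" "tt \<sigma> (neg_lit z)"
  shows "run cls \<sigma> 2 ((MLit z, [Nd En]) # S) = (-1, (MLit (neg_lit z), [Nd En]) # (MLit z, [Cl 0 En, Nd En]) # S)"
  using assms by (simp add: numeral_eq_Suc tt_def)

lemma divk:
  "tt \<sigma> z \<Longrightarrow> tt \<sigma> (neg_lit z) \<Longrightarrow> fst (run cls \<sigma> (2 * k) ((MLit z, [Nd En]) # S)) = - int k"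
proof (induction k arbitrary: z S)
  case 0 then show ?case by simp
next
  case (Suc k)
  have eq: "2 * Suc k = 2 + 2 * k" by simp
  show ?case unfolding eq run_add div2[OF Suc.prems] using Suc.IH[of "neg_lit z"] Suc.prems
    by (simp add: split_def)
qed

lemma init1: "run cls \<sigma> 1 [(M0, [Nd En])] = (0, [(M0, [Cl 0 En, Nd En])])"
  using ne by (simp add: s_M0_En)

lemma rounds_good:
  assumes g: "\<forall>i<length cls. tt \<sigma> (yy cls \<sigma> i) \<and> \<not> tt \<sigma> (neg_lit (yy cls \<sigma> i))"
  shows "\<exists>H. run cls \<sigma> (1 + 12 * q) [(M0, [Nd En])] = (0, [(M0, Cl (q mod length cls) En # H)])"
proof (induction q)
  case 0 then show ?case using init1 by simp
next
  case (Suc q)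
  then obtain H where H: "run cls \<sigma> (1 + 12 * q) [(M0, [Nd En])] = (0, [(M0, Cl (q mod length cls) En # H)])" by blast
  have i: "q mod length cls < length cls" using ne by simp
  have eq: "1 + 12 * Suc q = (1 + 12 * q) + 12" by simp
  show ?case unfolding eq run_add[of _ _ "1 + 12 * q"] H using good12[OF i] g i by (simp add: mod_Suc_eq)
qed

lemma good_lb:
  assumes g: "\<forall>i<length cls. tt \<sigma> (yy cls \<sigma> i) \<and> \<not> tt \<sigma> (neg_lit (yy cls \<sigma> i))"
  shows "fst (run cls \<sigma> k [(M0, [Nd En])]) \<ge> -2"
proof (cases k)
  case 0 then show ?thesis by simp
next
  case (Suc k')
  define q r where "q = k' div 12" and "r = k' mod 12"
  have k: "k = (1 + 12 * q) + r" unfolding q_def r_def Suc by simp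
  obtain H where H: "run cls \<sigma> (1 + 12 * q) [(M0, [Nd En])] = (0, [(M0, Cl (q mod length cls) En # H)])"
    using rounds_good[OF g] by blast
  have i: "q mod length cls < length cls" using ne by simp
  have "fst (run cls \<sigma> r [(M0, Cl (q mod length cls) En # H)]) \<ge> -2"
    using good_partial[OF i, of r H] g i unfolding r_def by simp
  then show ?thesis unfolding k run_add[of _ _ "1 + 12 * q"] H by (simp add: split_def)
qed

lemma caseB:
  assumes nd: "\<forall>i<length cls. tt \<sigma> (yy cls \<sigma> i) \<longrightarrow> \<not> tt \<sigma> (neg_lit (yy cls \<sigma> i))"
    and bad: "i0 < length cls" "\<not> tt \<sigma> (yy cls \<sigma> i0)"
  shows "\<not> liminf_avg_nonneg (pw cls \<sigma>)"
proof -
  define l where "l i = (if tt \<sigma> (yy cls \<sigma> i) then 12 else (8::nat))" for i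
  define v where "v i = (if tt \<sigma> (yy cls \<sigma> i) then 0 else (-1::int))" for i
  have part: "\<forall>H. \<exists>H'. run cls \<sigma> (\<Sum>i<q. l i) [(M0, Cl 0 En # H)] = ((\<Sum>i<q. v i), [(M0, Cl (q mod length cls) En # H')])"
    if "q \<le> length cls" for q
    using that
  proof (induction q)
    case 0 then show ?case by simp
  next
    case (Suc q)
    show ?case
    proof
      fix H
      obtain H' where H': "run cls \<sigma> (\<Sum>i<q. l i) [(M0, Cl 0 En # H)] = ((\<Sum>i<q. v i), [(M0, Cl (q mod length cls) En # H')])"
        using Suc by auto
      have q: "q < length cls" using Suc by simp
      then have qm: "q mod length cls = q" by simp
      show "\<exists>H'. run cls \<sigma> (\<Sum>i<Suc q. l i) [(M0, Cl 0 En # H)] = ((\<Sum>i<Suc q. v i), [(M0, Cl (Suc q mod length cls) En # H')])"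
      proof (cases "tt \<sigma> (yy cls \<sigma> q)")
        case True
        then show ?thesis unfolding sum.lessThan_Suc run_add[of _ _ "\<Sum>i<q. l i"] H' qm using good12[OF q True] nd q
          by (simp add: l_def v_def)
      next
        case False
        then show ?thesis unfolding sum.lessThan_Suc run_add[of _ _ "\<Sum>i<q. l i"] H' qm using false8[OF q False]
          by (simp add: l_def v_def)
      qed
    qed
  qed
  define R where "R = (\<Sum>i<length cls. l i)"
  define V where "V = (\<Sum>i<length cls. v i)"
  have rounds: "\<exists>H. run cls \<sigma> (1 + r * R) [(M0, [Nd En])] = (int r * V, [(M0, Cl 0 En # H)])" for r
  proof (induction r)
    case 0 then show ?case using init1 by simp
  next
    case (Suc r)
    then obtain H where H: "run cls \<sigma> (1 + r * R) [(M0, [Nd En])] = (int r * V, [(M0, Cl 0 En # H)])" by blast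
    have eq: "1 + Suc r * R = (1 + r * R) + R" by simp
    obtain H' where H': "run cls \<sigma> R [(M0, Cl 0 En # H)] = (V, [(M0, Cl 0 En # H')])"
      using part[of "length cls"] unfolding R_def V_def by auto
    show ?case unfolding eq run_add[of _ _ "1 + r * R"] H using H' by (auto simp: algebra_simps)
  qed
  have V: "V \<le> -1"
  proof -
    have "V = v i0 + (\<Sum>i\<in>{..<length cls} - {i0}. v i)"
      unfolding V_def using bad(1) by (simp add: sum.remove)
    moreover have "(\<Sum>i\<in>{..<length cls} - {i0}. v i) \<le> 0" by (rule sum_nonpos) (simp add: v_def)
    ultimately show ?thesis using bad(2) by (simp add: v_def)
  qed
  have R: "R \<ge> 1"
  proof -
    have "l i0 \<le> R" unfolding R_def using bad(1) by (intro member_le_sum) auto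
    then show ?thesis by (simp add: l_def split: if_splits)
  qed
  show ?thesis
  proof (rule not_liminf)
    show "1 / (2 * real R) > 0" using R by simp
  next
    fix N
    define r where "r = Suc N"
    obtain H where H: "run cls \<sigma> (1 + r * R) [(M0, [Nd En])] = (int r * V, [(M0, Cl 0 En # H)])"
      using rounds by blast
    have sum: "(\<Sum>i<1 + r * R. pw cls \<sigma> i) = int r * V" unfolding run_pw H by simp
    have "r \<le> r * R" using R by simp
    then have k: "1 + r * R \<ge> N" unfolding r_def by simp
    have "real_of_int (int r * V) / real (1 + r * R) \<le> - 1 / (2 * real R)"
    proof -
      have r: "r = Suc N" by (simp add: r_def)
      have r1: "real r \<ge> 1" unfolding r by simp
      have R1: "real R \<ge> 1" using R by simp
      have "int r * V \<le> int r * (-1)" by (rule mult_left_mono) (use V in auto)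
      then have "real_of_int (int r * V) \<le> real_of_int (- int r)" by (simp only: of_int_le_iff)
      then have rv: "real_of_int (int r * V) \<le> - real r" by simp
      have pos: "real (1 + r * R) > 0" by (simp only: of_nat_0_less_iff)
      have "1 * 1 \<le> real r * real R" by (rule mult_mono) (use r1 R1 in auto)
      then have a: "real (1 + r * R) \<le> 2 * real r * real R" by (simp add: mult.commute)
      have "- real r / real (1 + r * R) \<le> - 1 / (2 * real R)"
      proof -
        have "1 / (2 * real R) = real r / (2 * real r * real R)" using r1 by simp
        also have "\<dots> \<le> real r / real (1 + r * R)"
          by (rule divide_left_mono) (use a pos r1 in auto)
        finally show ?thesis by simp
      qed
      moreover have "real_of_int (int r * V) / real (1 + r * R) \<le> - real r / real (1 + r * R)"
        using divide_right_mono[OF rv, of "real (1 + r * R)"] pos by simp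
      ultimately show ?thesis by linarith
    qed
    then show "\<exists>k\<ge>N. real_of_int (\<Sum>i<k. pw cls \<sigma> i) / real k \<le> - (1 / (2 * real R))"
      using k sum by (intro exI[of _ "1 + r * R"]) simp
  qed
qed

lemma caseA:
  assumes ex: "\<exists>i<length cls. tt \<sigma> (yy cls \<sigma> i) \<and> tt \<sigma> (neg_lit (yy cls \<sigma> i))"
  shows "\<not> liminf_avg_nonneg (pw cls \<sigma>)"
proof -
  define P where "P i \<longleftrightarrow> i < length cls \<and> tt \<sigma> (yy cls \<sigma> i) \<and> tt \<sigma> (neg_lit (yy cls \<sigma> i))" for i
  define i1 where "i1 = (LEAST i. P i)"
  have exP: "\<exists>i. P i" using ex unfolding P_def by blast
  have P1: "P i1" unfolding i1_def by (rule LeastI_ex[OF exP])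
  have notP: "\<not> P i" if "i < i1" for i using not_less_Least[of i P] that unfolding i1_def by blast
  have i1L: "i1 < length cls" using P1 unfolding P_def by blast
  have pre: "\<exists>T s H. run cls \<sigma> T [(M0, [Nd En])] = (s, [(M0, Cl q En # H)])" if "q \<le> i1" for q
    using that
  proof (induction q)
    case 0 then show ?case using init1 by blast
  next
    case (Suc q)
    then obtain T s H where H: "run cls \<sigma> T [(M0, [Nd En])] = (s, [(M0, Cl q En # H)])" by auto
    have q: "q < length cls" "q < i1" using Suc.prems i1L by auto
    have qm: "Suc q mod length cls = Suc q" using Suc.prems i1L by simp
    show ?case
    proof (cases "tt \<sigma> (yy cls \<sigma> q)")
      case True
      then have "\<not> tt \<sigma> (neg_lit (yy cls \<sigma> q))" using notP[OF q(2)] q(1) unfolding P_def by simp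
      then have "run cls \<sigma> (T + 12) [(M0, [Nd En])] = (s, [(M0, Cl (Suc q) En # Rt q Ex # Cl q En # H)])"
        unfolding run_add[of _ _ T] H using good12[OF q(1) True] qm by simp
      then show ?thesis by blast
    next
      case False
      then have "run cls \<sigma> (T + 8) [(M0, [Nd En])] = (s - 1, [(M0, Cl (Suc q) En # Rt q Ex # Cl q En # H)])"
        unfolding run_add[of _ _ T] H using false8[OF q(1) False] qm by simp
      then show ?thesis by blast
    qed
  qed
  obtain T s H where H: "run cls \<sigma> T [(M0, [Nd En])] = (s, [(M0, Cl i1 En # H)])" using pre by blast
  define S where "S = (MCl i1, [Cl (chh \<sigma> i1) En, Nd En]) # [(M0, Cl i1 En # H)]"
  have H3: "run cls \<sigma> (T + 3) [(M0, [Nd En])] = (s, (MLit (yy cls \<sigma> i1), [Nd En]) # S)"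
    unfolding run_add[of _ _ T] H using enter3[of i1 H] unfolding S_def by simp
  have runj: "fst (run cls \<sigma> (T + 3 + 2 * j) [(M0, [Nd En])]) = s - int j" for j
    unfolding run_add[of _ _ "T + 3"] H3 using divk[of "yy cls \<sigma> i1" j S] P1 unfolding P_def by (simp add: split_def)
  show ?thesis
  proof (rule not_liminf)
    show "(1::real) / 8 > 0" by simp
  next
    fix N
    define j where "j = N + 8 * nat \<bar>s\<bar> + T + 3"
    define k where "k = T + 3 + 2 * j"
    have kN: "k \<ge> N" unfolding k_def j_def by simp
    have sum: "(\<Sum>i<k. pw cls \<sigma> i) = s - int j" using runj[of j] unfolding run_pw k_def by simp
    have kpos: "real k > 0" unfolding k_def by simp
    have "8 * s + int T + 3 \<le> 6 * int j" unfolding j_def by simp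
    then have "real_of_int (8 * s + int T + 3) \<le> real_of_int (6 * int j)"
      by (simp only: of_int_le_iff)
    then have "8 * real_of_int s + real T + 3 \<le> 6 * real j" by simp
    moreover have "real k = real T + 3 + 2 * real j" unfolding k_def by simp
    ultimately have "real_of_int (s - int j) \<le> - (1 / 8) * real k"
      by linarith
    then have "real_of_int (s - int j) / real k \<le> - (1 / 8)"
      using kpos by (simp add: pos_divide_le_eq)
    then have fin: "real_of_int (\<Sum>i<k. pw cls \<sigma> i) / real k \<le> - (1 / 8)"
      by (simp only: sum)
    show "\<exists>k\<ge>N. real_of_int (\<Sum>i<k. pw cls \<sigma> i) / real k \<le> - (1 / 8)"
      using kN fin by blast
  qed
qed

end


definition chs :: "(nat \<Rightarrow> bool) \<Rightarrow> lit list list \<Rightarrow> nat \<Rightarrow> nat" where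
  "chs a cls i = (if \<exists>j<3. lit_val a (cls ! i ! j) then SOME j. j < 3 \<and> lit_val a (cls ! i ! j) else 0)"

lemma chs_lt: "chs a cls i < 3"
proof (cases "\<exists>j<3. lit_val a (cls ! i ! j)")
  case True
  then have "\<exists>j. j < 3 \<and> lit_val a (cls ! i ! j)" by blast
  from someI_ex[OF this] True show ?thesis unfolding chs_def by simp
qed (auto simp: chs_def)

lemma chs_val: "\<exists>j<3. lit_val a (cls ! i ! j) \<Longrightarrow> lit_val a (cls ! i ! chs a cls i)"
proof -
  assume h: "\<exists>j<3. lit_val a (cls ! i ! j)"
  then have "\<exists>j. j < 3 \<and> lit_val a (cls ! i ! j)" by blast
  from someI_ex[OF this] h show ?thesis unfolding chs_def by simp
qed

definition sg :: "(nat \<Rightarrow> bool) \<Rightarrow> lit list list \<Rightarrow> (modname, vtx, nat) mstrategy" where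
  "sg a cls m h = (case m of
     M0 \<Rightarrow> (case h of Rt i x # _ \<Rightarrow> (Rt i x, 0, Cl (Suc i mod length cls) En) | _ \<Rightarrow> (Nd En, 0, Cl 0 En))
   | MCl i \<Rightarrow> (case h of Rt j x # _ \<Rightarrow> (Rt j x, 0, Nd Ex) | _ \<Rightarrow> (Nd En, 0, Cl (chs a cls i) En))
   | MLit y \<Rightarrow> (case h of Rt j x # _ \<Rightarrow> (Rt j x, 2, Nd Ex)
                 | _ \<Rightarrow> (Nd En, -1, if lit_val a y then Cl 0 En else Nd Ex)))"

lemma sg_legal: "legal_strategy (phi_game n cls) (sg a cls)"
  unfolding legal_strategy_def hastr_iff
proof (intro allI impI)
  fix m p h
  assume "p \<in> own1 (phi_game n cls) m \<and> hastr cls m p"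
  then have ht: "hastr cls m p" by simp
  show "sg a cls m (p # h) \<in> trans (phi_game n cls) m \<and> fst (sg a cls m (p # h)) = p"
  proof (cases m)
    case M0 then show ?thesis using ht by (auto simp: sg_def G_trans)
  next
    case (MCl i) then show ?thesis using ht chs_lt[of a cls i] by (auto simp: sg_def G_trans)
  next
    case (MLit y) then show ?thesis using ht by (auto simp: sg_def G_trans)
  qed
qed

theorem lemma12:
  fixes n :: nat and cls :: "lit list list"
  assumes "is_3cnf n cls"
  shows "has_modular_winning (phi_game n cls) \<longleftrightarrow> satisfiable cls"
proof
  assume hw: "has_modular_winning (phi_game n cls)"
  show "satisfiable cls"
  proof (cases "cls = []")
    case True then show ?thesis by (simp add: satisfiable_def)
  next
    case False
    obtain \<sigma> where legal: "legal_strategy (phi_game n cls) \<sigma>"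
      and win: "\<And>c w. consistent_play (phi_game n cls) \<sigma> c w \<Longrightarrow> liminf_avg_nonneg w"
      using hw unfolding has_modular_winning_def modular_winning_def by blast
    interpret gm n cls \<sigma> using legal False by unfold_locales
    have lim: "liminf_avg_nonneg (pw cls \<sigma>)" using win pc_consistent[OF legal False] by blast
    show ?thesis
    proof (rule ccontr)
      assume ns: "\<not> satisfiable cls"
      have notall: "\<not> (\<forall>i<length cls. tt \<sigma> (yy cls \<sigma> i) \<and> \<not> tt \<sigma> (neg_lit (yy cls \<sigma> i)))"
      proof
        assume allg: "\<forall>i<length cls. tt \<sigma> (yy cls \<sigma> i) \<and> \<not> tt \<sigma> (neg_lit (yy cls \<sigma> i))"
        define a where "a x = tt \<sigma> (x, True)" for x
        have "\<forall>c\<in>set cls. \<exists>l\<in>set c. lit_val a l"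
        proof
          fix c assume c: "c \<in> set cls"
          then obtain i where i: "i < length cls" "c = cls ! i" by (auto simp: in_set_conv_nth)
          have len: "length c = 3" using assms c by (simp add: is_3cnf_def)
          have ch: "chh \<sigma> i < 3" using s_Cl_En by simp
          have mem: "yy cls \<sigma> i \<in> set c" using i len ch by (simp add: yy_def)
          obtain x b where xb: "yy cls \<sigma> i = (x, b)" by (cases "yy cls \<sigma> i")
          have g: "tt \<sigma> (x, b)" "\<not> tt \<sigma> (x, \<not> b)" using allg i xb by (auto simp: neg_lit_def)
          then have "lit_val a (x, b)" by (cases b) (auto simp: a_def lit_val_def)
          then show "\<exists>l\<in>set c. lit_val a l" using mem xb by metis
        qed
        then show False using ns unfolding satisfiable_def by blast
      qed
      show False
      proof (cases "\<exists>i<length cls. tt \<sigma> (yy cls \<sigma> i) \<and> tt \<sigma> (neg_lit (yy cls \<sigma> i))")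
        case True then show False using caseA lim by blast
      next
        case False
        then have nd: "\<forall>i<length cls. tt \<sigma> (yy cls \<sigma> i) \<longrightarrow> \<not> tt \<sigma> (neg_lit (yy cls \<sigma> i))" by blast
        from notall nd obtain i0 where "i0 < length cls" "\<not> tt \<sigma> (yy cls \<sigma> i0)" by blast
        then show False using caseB[OF nd] lim by blast
      qed
    qed
  qed
next
  assume sat: "satisfiable cls"
  then obtain a where a: "\<forall>c\<in>set cls. \<exists>l\<in>set c. lit_val a l" unfolding satisfiable_def by blast
  show "has_modular_winning (phi_game n cls)"
  proof (cases "cls = []")
    case True
    have "modular_winning (phi_game n cls) (sg a cls)"
      unfolding modular_winning_def
    proof (intro conjI allI impI)
      show "legal_strategy (phi_game n cls) (sg a cls)" by (rule sg_legal)
    next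
      fix c w assume cp: "consistent_play (phi_game n cls) (sg a cls) c w"
      then have st: "step (phi_game n cls) [(M0, [Nd En])] (w 0) (c (Suc 0))"
        unfolding consistent_play_def by (metis G_init)
      have False using st True by (cases rule: step.cases) (auto simp: G_trans)
      then show "liminf_avg_nonneg w" ..
    qed
    then show ?thesis unfolding has_modular_winning_def by blast
  next
    case False
    define \<sigma> where "\<sigma> = sg a cls"
    have legal: "legal_strategy (phi_game n cls) \<sigma>" unfolding \<sigma>_def by (rule sg_legal)
    interpret gm n cls \<sigma> using legal False by unfold_locales
    have tt_iff: "tt \<sigma> y \<longleftrightarrow> lit_val a y" for y by (simp add: tt_def \<sigma>_def sg_def)
    have chh_eq: "chh \<sigma> i = chs a cls i" for i by (simp add: chh_def \<sigma>_def sg_def)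
    have allg: "\<forall>i<length cls. tt \<sigma> (yy cls \<sigma> i) \<and> \<not> tt \<sigma> (neg_lit (yy cls \<sigma> i))"
    proof (intro allI impI)
      fix i assume i: "i < length cls"
      then have ci: "cls ! i \<in> set cls" by simp
      then obtain l where l: "l \<in> set (cls ! i)" "lit_val a l" using a by blast
      have len: "length (cls ! i) = 3" using assms ci by (simp add: is_3cnf_def)
      from l obtain j where "j < length (cls ! i)" "cls ! i ! j = l" by (auto simp: in_set_conv_nth)
      then have "\<exists>j<3. lit_val a (cls ! i ! j)" using len l(2) by auto
      then have "lit_val a (yy cls \<sigma> i)" using chs_val chh_eq by (simp add: yy_def)
      then show "tt \<sigma> (yy cls \<sigma> i) \<and> \<not> tt \<sigma> (neg_lit (yy cls \<sigma> i))"
        using tt_iff by (simp add: lit_val_def neg_lit_def)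
    qed
    have "modular_winning (phi_game n cls) \<sigma>"
      unfolding modular_winning_def
    proof (intro conjI allI impI)
      show "legal_strategy (phi_game n cls) \<sigma>" by (rule legal)
    next
      fix c w assume cp: "consistent_play (phi_game n cls) \<sigma> c w"
      have "w i = pw cls \<sigma> i" for i using consistent_unique[OF cp] by blast
      then have ws: "(\<Sum>i<k. w i) = fst (run cls \<sigma> k [(M0, [Nd En])])" for k using run_pw by simp
      show "liminf_avg_nonneg w"
      proof (rule liminf_lb[where C=2])
        fix k show "real_of_int (\<Sum>i<k. w i) \<ge> - 2" unfolding ws using good_lb[OF allg, of k] by linarith
      qed
    qed
    then show ?thesis unfolding has_modular_winning_def by blast
  qed
qed

end
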